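(* Let $\mathcal{N}$ be a finite set of players (cognitive/CPC nodes) and let $\mathcal{K}$ be a finite set of primary users. For every coalition $S\subseteq\mathcal{N}$, every $i\in S$ and every $k\in\mathcal{K}$, let $u_{ik}(S)\in\mathbb{R}$ be a number depending only on $i$, $k$ and the set $S$. Fix $0<\kappa\le 1$ and define the payoff $$\phi_i(S)=\sum_{k\in\mathcal{K}}u_{ik}(S)-c(S),\qquad c(S)=\begin{cases}\kappa(|S|-1),& |S|>1,\\ 0,&\text{otherwise},\end{cases}$$ with $\phi(\emptyset)=0$, the coalition value $v(S)=\sum_{j\in S}\phi_j(S)$ (so $v(\emptyset)=0$), and for $i\in S$ $$q_i(S)=\begin{cases}\phi_i(S),&\text{if }\phi_j(S)\ge\phi_j(S\setminus\{i\})\text{ for all }j\in S\setminus\{i\},\\ -\infty,&\text{otherwise.}\end{cases}$$ For coalitions $S_1,S_2$ both containing $i$, write $S_1\succ_i S_2$ iff $q_i(S_1)>q_i(S_2)$ and $v(S_1)+v(S_2\setminus\{i\})>v(S_1\setminus\{i\})+v(S_2)$. Given a partition $\Pi$ of $\mathcal{N}$, a join operation consists of a player $i$ in its coalition $S_m\in\Pi$ and a set $S_k\in\Pi\cup\{\emptyset\}$, $S_k\neq S_m$, with $S_k\cup\{i\}\succ_i S_m$; it replaces $\Pi$ by $\Pi'=(\Pi\setminus\{S_m,S_k\})\cup\{S_m\setminus\{i\},S_k\cup\{i\}\}$ (discarding empty sets). Then, starting from any initial partition $\Pi_{\mathrm{init}}$ of $\mathcal{N}$, every sequence of partitions $\Pi_0=\Pi_{\mathrm{init}}\to\Pi_1\to\Pi_2\to\cdots$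 in which each $\Pi_{l}$ is obtained from $\Pi_{l-1}$ by a join operation is finite; i.e., the sequential join-operation process always converges to a final partition $\Pi_{\mathrm{final}}$ of $\mathcal{N}$ into disjoint coalitions, irrespective of $\Pi_{\mathrm{init}}$.
   Context: In the paper, $u_{ik}(S)$ is the negative Kullback–Leibler distance between two cooperative (Dirichlet-process-based) estimates, computed by node $i$ within coalition $S$, of the distribution of primary user $k$'s activity; the only property used in the statement is that it is a real number determined by $i$, $k$ and $S$ (the game is hedonic: payoffs depend only on the members of one's own coalition). Join operations are performed one at a time in an arbitrary sequential order. *)

theory Defs
  imports Main "HOL-Library.Disjoint_Sets" "HOL-Library.Extended_Real"
begin

definition cost :: "real \<Rightarrow> 'a set \<Rightarrow> real" where
  "cost \<kappa> S = (if card S > 1 then \<kappa> * (real (card S) - 1) else 0)"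

definition phi :: "'k set \<Rightarrow> ('a \<Rightarrow> 'k \<Rightarrow> 'a set \<Rightarrow> real) \<Rightarrow> real \<Rightarrow> 'a \<Rightarrow> 'a set \<Rightarrow> real" where
  "phi K u \<kappa> i S = (if S = {} then 0 else (\<Sum>k\<in>K. u i k S) - cost \<kappa> S)"

definition val :: "'k set \<Rightarrow> ('a \<Rightarrow> 'k \<Rightarrow> 'a set \<Rightarrow> real) \<Rightarrow> real \<Rightarrow> 'a set \<Rightarrow> real" where
  "val K u \<kappa> S = (\<Sum>j\<in>S. phi K u \<kappa> j S)"

definition qpay :: "'k set \<Rightarrow> ('a \<Rightarrow> 'k \<Rightarrow> 'a set \<Rightarrow> real) \<Rightarrow> real \<Rightarrow> 'a \<Rightarrow> 'a set \<Rightarrow> ereal" where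
  "qpay K u \<kappa> i S =
     (if (\<forall>j\<in>S - {i}. phi K u \<kappa> j S \<ge> phi K u \<kappa> j (S - {i}))
      then ereal (phi K u \<kappa> i S) else -\<infinity>)"

definition prefers :: "'k set \<Rightarrow> ('a \<Rightarrow> 'k \<Rightarrow> 'a set \<Rightarrow> real) \<Rightarrow> real \<Rightarrow> 'a \<Rightarrow> 'a set \<Rightarrow> 'a set \<Rightarrow> bool" where
  "prefers K u \<kappa> i S1 S2 \<longleftrightarrow>
     qpay K u \<kappa> i S1 > qpay K u \<kappa> i S2 \<and>
     val K u \<kappa> S1 + val K u \<kappa> (S2 - {i}) > val K u \<kappa> (S1 - {i}) + val K u \<kappa> S2"

definition join_op :: "'k set \<Rightarrow> ('a \<Rightarrow> 'k \<Rightarrow> 'a set \<Rightarrow> real) \<Rightarrow> real \<Rightarrow> 'a set set \<Rightarrow> 'a set set \<Rightarrow> bool" where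
  "join_op K u \<kappa> P P' \<longleftrightarrow>
     (\<exists>i Sm Sk. Sm \<in> P \<and> i \<in> Sm \<and> Sk \<in> P \<union> {{}} \<and> Sk \<noteq> Sm \<and>
        prefers K u \<kappa> i (insert i Sk) Sm \<and>
        P' = ((P - {Sm, Sk}) \<union> {Sm - {i}, insert i Sk}) - {{}})"

end

theory Submission
  imports Defs
begin

lemma val_empty: "val K u \<kappa> {} = 0" by (simp add: val_def)

lemma sum_drop_empty:
  assumes "finite X"
  shows "(\<Sum>S\<in>X. val K u \<kappa> S) = (\<Sum>S\<in>X - {{}}. val K u \<kappa> S)"
proof (cases "{} \<in> X")
  case True
  then show ?thesis using assms by (simp add: sum.remove val_empty)
next
  case False
  then show ?thesis by simp
qed

lemma step:
  assumes fin: "finite N" and P: "partition_on N P" and J: "join_op K u \<kappa> P P'"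
  shows "partition_on N P' \<and> (\<Sum>S\<in>P. val K u \<kappa> S) < (\<Sum>S\<in>P'. val K u \<kappa> S)"
proof -
  obtain i Sm Sk where Sm: "Sm \<in> P" and iSm: "i \<in> Sm" and Sk: "Sk \<in> P \<union> {{}}"
    and ne: "Sk \<noteq> Sm" and pr: "prefers K u \<kappa> i (insert i Sk) Sm"
    and P': "P' = ((P - {Sm, Sk}) \<union> {Sm - {i}, insert i Sk}) - {{}}"
    using J unfolding join_op_def by blast
  define Q where "Q = P - {Sm, Sk}"
  define A where "A = Sm - {i}"
  define B where "B = insert i Sk"
  have dj: "\<And>X Y. X \<in> P \<Longrightarrow> Y \<in> P \<Longrightarrow> X \<noteq> Y \<Longrightarrow> X \<inter> Y = {}"
    using P unfolding partition_on_def disjoint_def by blast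
  have nemp: "{} \<notin> P" using P unfolding partition_on_def by blast
  have un: "\<Union>P = N" using P unfolding partition_on_def by blast
  have finP: "finite P" using P fin by (meson finite_elements)
  have iSk: "i \<notin> Sk" using Sk dj[OF Sm _ ne[symmetric]] iSm by auto
  have SkSm: "Sk \<inter> Sm = {}" using Sk dj[OF Sm _ ne[symmetric]] by auto
  have AQ: "A \<notin> Q"
  proof
    assume "A \<in> Q"
    hence "A \<in> P" "A \<noteq> Sm" unfolding Q_def by auto
    hence "A \<inter> Sm = {}" using dj Sm by blast
    hence "A = {}" unfolding A_def by auto
    thus False using \<open>A \<in> P\<close> nemp by simp
  qed
  have BQ: "B \<notin> Q"
  proof
    assume "B \<in> Q"
    hence "B \<in> P" "B \<noteq> Sm" unfolding Q_def by auto
    hence "B \<inter> Sm = {}" using dj Sm by blast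
    thus False using iSm unfolding B_def by auto
  qed
  have AB: "A \<noteq> B" unfolding A_def B_def by auto
  have P'': "P' = (Q \<union> {A, B}) - {{}}" unfolding P' Q_def A_def B_def by simp
  have finQ: "finite Q" unfolding Q_def using finP by simp
  have "partition_on N P'"
    unfolding partition_on_def disjoint_def
  proof (intro conjI ballI impI)
    show "\<Union>P' = N"
    proof -
      have "\<Union>P' = \<Union>Q \<union> A \<union> B" unfolding P'' by auto
      also have "\<dots> = \<Union>Q \<union> Sm \<union> Sk" unfolding A_def B_def using iSm by auto
      also have "\<dots> = \<Union>P" unfolding Q_def using Sm Sk by auto
      finally show ?thesis using un by simp
    qed
    show "{} \<notin> P'" unfolding P'' by simp
  next
    fix X Y assume X: "X \<in> P'" and Y: "Y \<in> P'" and XY: "X \<noteq> Y"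
    have QP: "\<And>Z. Z \<in> Q \<Longrightarrow> Z \<in> P \<and> Z \<noteq> Sm \<and> Z \<noteq> Sk" unfolding Q_def by auto
    have QA: "\<And>Z. Z \<in> Q \<Longrightarrow> Z \<inter> A = {}" using QP dj Sm unfolding A_def by blast
    have QB: "\<And>Z. Z \<in> Q \<Longrightarrow> Z \<inter> B = {}"
    proof -
      fix Z assume Z: "Z \<in> Q"
      have "Z \<inter> Sm = {}" using QP[OF Z] dj Sm by blast
      moreover have "Z \<inter> Sk = {}" using QP[OF Z] dj Sk by auto
      ultimately show "Z \<inter> B = {}" unfolding B_def using iSm by auto
    qed
    have ABd: "A \<inter> B = {}" unfolding A_def B_def using SkSm by auto
    have "X \<in> Q \<union> {A, B}" "Y \<in> Q \<union> {A, B}" using X Y unfolding P'' by auto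
    hence hX: "X \<in> Q \<or> X = A \<or> X = B" and hY: "Y \<in> Q \<or> Y = A \<or> Y = B" by auto
    from hX hY show "X \<inter> Y = {}"
    proof (elim disjE)
      assume "X \<in> Q" "Y \<in> Q" thus ?thesis using XY QP dj by metis
    next
      assume "X \<in> Q" "Y = A" thus ?thesis using QA by simp
    next
      assume "X \<in> Q" "Y = B" thus ?thesis using QB by simp
    next
      assume "X = A" "Y \<in> Q" thus ?thesis using QA[of Y] by (simp add: Int_commute)
    next
      assume "X = A" "Y = A" thus ?thesis using XY by simp
    next
      assume "X = A" "Y = B" thus ?thesis using ABd by simp
    next
      assume "X = B" "Y \<in> Q" thus ?thesis using QB[of Y] by (simp add: Int_commute)
    next
      assume "X = B" "Y = A" thus ?thesis using ABd by (simp add: Int_commute)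
    next
      assume "X = B" "Y = B" thus ?thesis using XY by simp
    qed
  qed
  moreover have "(\<Sum>S\<in>P. val K u \<kappa> S) < (\<Sum>S\<in>P'. val K u \<kappa> S)"
  proof -
    have "(\<Sum>S\<in>P'. val K u \<kappa> S) = (\<Sum>S\<in>Q \<union> {A, B}. val K u \<kappa> S)"
      unfolding P'' using sum_drop_empty[of "Q \<union> {A,B}" K u \<kappa>] finQ by simp
    also have "\<dots> = (\<Sum>S\<in>Q. val K u \<kappa> S) + val K u \<kappa> A + val K u \<kappa> B"
      using finQ AQ BQ AB by (simp add: sum.union_disjoint)
    finally have e1: "(\<Sum>S\<in>P'. val K u \<kappa> S) = (\<Sum>S\<in>Q. val K u \<kappa> S) + val K u \<kappa> A + val K u \<kappa> B" .
    have "(\<Sum>S\<in>P. val K u \<kappa> S) = (\<Sum>S\<in>P - {{}}. val K u \<kappa> S)"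
      using sum_drop_empty finP by blast
    also have "P - {{}} = insert Sk P - {{}}" using Sk by auto
    also have "(\<Sum>S\<in>insert Sk P - {{}}. val K u \<kappa> S) = (\<Sum>S\<in>insert Sk P. val K u \<kappa> S)"
      using sum_drop_empty[of "insert Sk P" K u \<kappa>] finP by simp
    also have "insert Sk P = Q \<union> {Sm, Sk}" unfolding Q_def using Sm by auto
    also have "(\<Sum>S\<in>Q \<union> {Sm, Sk}. val K u \<kappa> S) = (\<Sum>S\<in>Q. val K u \<kappa> S) + val K u \<kappa> Sm + val K u \<kappa> Sk"
      using finQ ne unfolding Q_def by (simp add: sum.union_disjoint)
    finally have e2: "(\<Sum>S\<in>P. val K u \<kappa> S) = (\<Sum>S\<in>Q. val K u \<kappa> S) + val K u \<kappa> Sm + val K u \<kappa> Sk" .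
    have "B - {i} = Sk" unfolding B_def using iSk by auto
    hence "val K u \<kappa> B + val K u \<kappa> A > val K u \<kappa> Sk + val K u \<kappa> Sm"
      using pr unfolding prefers_def A_def B_def by simp
    thus ?thesis using e1 e2 by simp
  qed
  ultimately show ?thesis by blast
qed

theorem theorem1:
  fixes N :: "'a set" and K :: "'k set" and u :: "'a \<Rightarrow> 'k \<Rightarrow> 'a set \<Rightarrow> real"
    and \<kappa> :: real and Pinit :: "'a set set"
  assumes "finite N" and "finite K" and "0 < \<kappa>" and "\<kappa> \<le> 1"
    and "partition_on N Pinit"
  shows "(\<forall>P. (join_op K u \<kappa>)\<^sup>*\<^sup>* Pinit P \<longrightarrow> partition_on N P) \<and>
         \<not> (\<exists>f :: nat \<Rightarrow> 'a set set. f 0 = Pinit \<and> (\<forall>l. join_op K u \<kappa> (f l) (f (Suc l))))"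
proof
  show A: "\<forall>P. (join_op K u \<kappa>)\<^sup>*\<^sup>* Pinit P \<longrightarrow> partition_on N P"
  proof (intro allI impI)
    fix P assume "(join_op K u \<kappa>)\<^sup>*\<^sup>* Pinit P"
    then show "partition_on N P"
      by (induction rule: rtranclp_induct) (use assms step in blast)+
  qed
  show "\<not> (\<exists>f :: nat \<Rightarrow> 'a set set. f 0 = Pinit \<and> (\<forall>l. join_op K u \<kappa> (f l) (f (Suc l))))"
  proof
    assume "\<exists>f :: nat \<Rightarrow> 'a set set. f 0 = Pinit \<and> (\<forall>l. join_op K u \<kappa> (f l) (f (Suc l)))"
    then obtain f :: "nat \<Rightarrow> 'a set set" where f0: "f 0 = Pinit"
      and fs: "\<And>l. join_op K u \<kappa> (f l) (f (Suc l))" by blast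
    define \<Phi> where "\<Phi> P = (\<Sum>S\<in>P. val K u \<kappa> S)" for P :: "'a set set"
    have part: "partition_on N (f l)" for l
    proof (induction l)
      case 0 then show ?case using f0 assms by simp
    next
      case (Suc l) then show ?case using step[OF assms(1) _ fs] by blast
    qed
    have inc: "\<Phi> (f l) < \<Phi> (f (Suc l))" for l
      using step[OF assms(1) part fs] unfolding \<Phi>_def by blast
    have sm: "strict_mono (\<Phi> \<circ> f)" using inc by (simp add: strict_mono_Suc_iff)
    hence "inj f" unfolding strict_mono_def inj_def
      by (metis comp_apply linorder_neqE_nat order_less_irrefl)
    moreover have "range f \<subseteq> Pow (Pow N)"
      using part unfolding partition_on_def by blast
    hence "finite (range f)" using assms(1) by (meson finite_Pow_iff finite_subset)
    ultimately show False using finite_imageD by (metis infinite_UNIV_nat)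
  qed
qed

end
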